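(* Let $d\ge3$ be an integer, $p_1,\dots,p_d\in(0,1)$, $q_j=1-p_j$, and $P=\prod_{j=1}^d p_jq_j^{-1}$. Then there exist sequences $\varepsilon_n\to0$ and $\delta_n\to0$ such that for all sufficiently large $n$, $$\sum_{k=0}^n\binom nk^dP^k\le\left(\frac{P^{1/d}+1}{\sqrt{2\pi P^{1/d}}}+\varepsilon_n\right)^{d-1}n^{-\frac{d-1}{2}}\left(1+P^{1/d}\right)^{dn},$$ $$\sum_{k=0}^n\binom nk^dP^k\ge\left(\frac{P^{1/d}+1}{\sqrt{2\pi P^{1/d}}}\exp\!\left(-\frac{(P^{1/d}+1)^2}{2P^{1/d}}\right)+\delta_n\right)^{d}n^{-\frac{d-1}{2}}\left(1+P^{1/d}\right)^{dn}.$$ *)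

theory Defs
  imports Complex_Main
begin

end

theory Submission
  imports Defs "HOL-Probability.Probability"
begin


lemma ln_lower_aux:
  fixes x :: real assumes "0 \<le> x" shows "2*x/(2+x) \<le> ln (1+x)"
proof -
  let ?f = "\<lambda>x::real. ln (1+x) - 2*x/(2+x)"
  have "?f 0 \<le> ?f x"
  proof (rule DERIV_nonneg_imp_nondecreasing[OF assms])
    fix t :: real assume t: "0 \<le> t" "t \<le> x"
    have "(?f has_real_derivative (1/(1+t) - (2*(2+t) - 2*t)/(2+t)^2)) (at t)"
      using t by (auto intro!: derivative_eq_intros simp: power2_eq_square)
    moreover have "1/(1+t) - (2*(2+t) - 2*t)/(2+t)^2 = t^2/((1+t)*(2+t)^2)"
    proof -
      have a: "1+t \<noteq> 0" "2+t \<noteq> 0" using t by auto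
      show ?thesis using a by (simp add: divide_simps) (simp add: algebra_simps power2_eq_square)
    qed
    moreover have "0 \<le> t^2/((1+t)*(2+t)^2)" using t by simp
    ultimately show "\<exists>y. (?f has_real_derivative y) (at t) \<and> 0 \<le> y" by metis
  qed
  then show ?thesis by simp
qed

lemma ln_upper_aux:
  fixes x :: real assumes "0 \<le> x" shows "ln (1+x) \<le> x*(x+2)/(2*(x+1))"
proof -
  let ?f = "\<lambda>x::real. x*(x+2)/(2*(x+1)) - ln (1+x)"
  have "?f 0 \<le> ?f x"
  proof (rule DERIV_nonneg_imp_nondecreasing[OF assms])
    fix t :: real assume t: "0 \<le> t" "t \<le> x"
    have "(?f has_real_derivative (((1*(t+2) + t*1)*(2*(t+1)) - t*(t+2)*2)/(2*(t+1))^2 - 1/(1+t))) (at t)"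
      using t by (auto intro!: derivative_eq_intros simp: power2_eq_square)
    moreover have "((1*(t+2) + t*1)*(2*(t+1)) - t*(t+2)*2)/(2*(t+1))^2 - 1/(1+t) = t^2/(2*(1+t)^2)"
    proof -
      have a: "1+t \<noteq> 0" "t+1 \<noteq> 0" using t by auto
      show ?thesis using a by (simp add: divide_simps) (simp add: algebra_simps power2_eq_square)
    qed
    moreover have "0 \<le> t^2/(2*(1+t)^2)" using t by simp
    ultimately show "\<exists>y. (?f has_real_derivative y) (at t) \<and> 0 \<le> y" by metis
  qed
  then show ?thesis by simp
qed

definition la :: "nat \<Rightarrow> real" where
  "la n = ln (fact n) + real n - (real n + 1/2) * ln (real n)"

lemma la_diff:
  assumes "n \<ge> 1"
  shows "la n - la (Suc n) = (real n + 1/2) * ln (1 + 1/real n) - 1"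
proof -
  define L where "L = ln (1 + 1/real n)"
  have "1 + 1/real n = (real n + 1)/real n" using assms by (simp add: field_simps)
  then have h1: "ln (real n + 1) = ln (real n) + L"
    using assms unfolding L_def by (simp add: ln_div)
  have "ln (fact (Suc n) :: real) = ln (real n + 1) + ln (fact n)"
    by (simp add: ln_mult add.commute)
  then have h2: "ln (fact (Suc n) :: real) = ln (real n) + L + ln (fact n)" using h1 by simp
  have h3: "ln (real (Suc n)) = ln (real n) + L" using h1 by (simp add: add.commute)
  show ?thesis unfolding la_def h2 h3 L_def[symmetric] by (simp add: algebra_simps)
qed

lemma la_dec: assumes "n \<ge> 1" shows "la (Suc n) \<le> la n"
proof -
  have "2*(1/real n)/(2+1/real n) \<le> ln (1 + 1/real n)" by (rule ln_lower_aux) simp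
  moreover have "2*(1/real n)/(2+1/real n) = 1/(real n + 1/2)" using assms by (simp add: field_simps)
  ultimately have "1 \<le> (real n + 1/2) * ln (1 + 1/real n)"
    using assms by (simp add: field_simps)
  then show ?thesis using la_diff[OF assms] by simp
qed

lemma la_dec2: assumes "n \<ge> 1" shows "la n - la (Suc n) \<le> 1/(4*real n) - 1/(4*(real n + 1))"
proof -
  have "ln (1 + 1/real n) \<le> (1/real n)*((1/real n)+2)/(2*((1/real n)+1))" by (rule ln_upper_aux) simp
  then have "(real n + 1/2) * ln (1 + 1/real n) \<le> (real n + 1/2) * ((1/real n)*((1/real n)+2)/(2*((1/real n)+1)))"
    by (intro mult_left_mono) auto
  also have "\<dots> = 1 + (1/(4*real n) - 1/(4*(real n + 1)))" using assms by (simp add: divide_simps) (simp add: algebra_simps)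
  finally show ?thesis using la_diff[OF assms] by simp
qed

lemma la_lower: assumes "n \<ge> 1" shows "3/4 + 1/(4*real n) \<le> la n"
  using assms
proof (induction n rule: dec_induct)
  case base then show ?case by (simp add: la_def)
next
  case (step m)
  have e: "real (Suc m) = real m + 1" by simp
  have "1/(4*(real m+1)) = 1/(4*real m+4)" by simp
  with step la_dec2[of m] show ?case unfolding e by linarith
qed


lemma wallis_step_aux:
  fixes A B x :: real assumes "A > 0" "B > 0" "x \<ge> 0"
  shows "16^n * A^4 / (B^2 * (2*x+1)) * (4*(x+1)^2/(4*(x+1)^2 - 1)) =
         16^(Suc n) * ((x+1)*A)^4 / (((2*x+2)*(2*x+1)*B)^2 * (2*(x+1)+1))"
proof -
  have e: "4*(x+1)^2 - 1 = (2*x+1)*(2*x+3)" by (simp add: power2_eq_square algebra_simps)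
  have p: "2*x+1 > 0" "2*x+3 > 0" "x+1>0" using assms by auto
  show ?thesis unfolding e using assms p
    by (simp add: divide_simps power2_eq_square) (simp add: algebra_simps eval_nat_numeral)
qed

lemma wallis_id:
  "(\<Prod>k=1..n. 4*(real k)^2/(4*(real k)^2 - 1)) = 16^n * (fact n)^4 / ((fact (2*n))^2 * (2*real n+1))"
proof (induction n)
  case 0 then show ?case by simp
next
  case (Suc n)
  have f: "(fact (2 * Suc n) :: real) = (2*real n+2)*(2*real n+1)*fact (2*n)"
    by (simp add: algebra_simps)
  have f2: "(fact (Suc n) :: real) = (real n + 1) * fact n" by simp
  have "(\<Prod>k=1..Suc n. 4*(real k)^2/(4*(real k)^2 - 1)) =
     (\<Prod>k=1..n. 4*(real k)^2/(4*(real k)^2 - 1)) * (4*(real n+1)^2/(4*(real n+1)^2 - 1))"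
    by (simp add: prod.nat_ivl_Suc' add.commute)
  also have "\<dots> = 16^(Suc n) * ((real n+1)*fact n)^4 / (((2*real n+2)*(2*real n+1)*fact (2*n))^2 * (2*(real n+1)+1))"
    unfolding Suc.IH by (rule wallis_step_aux) auto
  finally show ?case unfolding f f2 by simp
qed


lemma la_2n:
  assumes "n \<ge> 1"
  shows "2 * la n - la (2*n) = (ln 2 + ln (\<Prod>k=1..n. 4*(real k)^2/(4*(real k)^2 - 1)) + ln ((2*real n+1)/real n))/2"
proof -
  have pos: "(fact n::real) > 0" "(fact (2*n)::real) > 0" "real n > 0" "2*real n + 1 > 0" using assms by auto
  have "ln (\<Prod>k=1..n. 4*(real k)^2/(4*(real k)^2 - 1)) = ln (16^n * (fact n)^4) - ln ((fact (2*n))^2 * (2*real n+1))"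
    unfolding wallis_id using pos by (simp add: ln_div)
  also have "\<dots> = real n * ln 16 + 4 * ln (fact n) - (2 * ln (fact (2*n)) + ln (2*real n+1))"
    using pos by (simp add: ln_mult ln_realpow)
  finally have w: "ln (\<Prod>k=1..n. 4*(real k)^2/(4*(real k)^2 - 1)) = real n * ln 16 + 4 * ln (fact n) - (2 * ln (fact (2*n)) + ln (2*real n+1))" .
  have l16: "ln (16::real) = 4 * ln 2"
  proof -
    have "(16::real) = 2^4" by simp
    then show ?thesis using ln_realpow[of "2::real" 4] by simp
  qed
  have q: "ln ((2*real n+1)/real n) = ln (2*real n+1) - ln (real n)" using pos by (simp add: ln_div)
  have d: "ln (real (2*n)) = ln 2 + ln (real n)" using pos by (simp add: ln_mult)
  show ?thesis unfolding w q la_def d l16 by (simp add: algebra_simps)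
qed

lemma la_limit_both:
  "(la \<longlongrightarrow> ln (2*pi)/2) sequentially \<and> (\<forall>n\<ge>1. ln (2*pi)/2 \<le> la n)"
proof -
  have dec: "decseq (\<lambda>n. la (n+1))"
    by (rule decseq_SucI) (simp add: la_dec)
  have bnd: "\<forall>i. 3/4 \<le> la (i+1)" using la_lower
    by (smt (verit) le_add2 of_nat_0_le_iff divide_nonneg_nonneg)
  obtain L where L: "(\<lambda>n. la (n+1)) \<longlonglongrightarrow> L" "\<forall>i. L \<le> la (i+1)"
    using decseq_convergent[OF dec bnd] by blast
  have sub: "(\<lambda>n. la (2*(n+1))) \<longlonglongrightarrow> L"
  proof -
    have "(\<lambda>n. la ((2*n+1)+1)) \<longlonglongrightarrow> L"
      using LIMSEQ_subseq_LIMSEQ[OF L(1), of "\<lambda>n. 2*n+1"] by (simp add: strict_mono_def o_def)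
    then show ?thesis by (simp add: algebra_simps)
  qed
  have lim1: "(\<lambda>n. 2 * la (n+1) - la (2*(n+1))) \<longlonglongrightarrow> 2*L - L"
    by (intro tendsto_intros L(1) sub)
  have W: "(\<lambda>n. \<Prod>k=1..n+1. 4*(real k)^2/(4*(real k)^2 - 1)) \<longlonglongrightarrow> pi/2"
    using LIMSEQ_Suc[OF wallis] by simp
  have Q: "(\<lambda>n. (2*real (n+1)+1)/real (n+1)) \<longlonglongrightarrow> 2"
  proof -
    have "(\<lambda>n. 2 + 1/real (n+1)) \<longlonglongrightarrow> 2 + 0"
      using LIMSEQ_Suc[OF lim_inverse_n'] by (intro tendsto_intros) simp
    moreover have "(2*real (n+1)+1)/real (n+1) = 2 + 1/real (n+1)" for n
      by (simp add: field_simps)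
    ultimately show ?thesis by simp
  qed
  have lim2: "(\<lambda>n. (ln 2 + ln (\<Prod>k=1..n+1. 4*(real k)^2/(4*(real k)^2 - 1)) + ln ((2*real (n+1)+1)/real (n+1)))/2)
     \<longlonglongrightarrow> (ln 2 + ln (pi/2) + ln 2)/2"
    by (intro tendsto_intros W Q) auto
  have ce: "(ln 2 + ln (pi/2) + ln (2::real))/2 = ln (2*pi)/2"
    by (simp add: ln_mult ln_div)
  have eq: "(\<lambda>n. 2 * la (n+1) - la (2*(n+1))) = (\<lambda>n. (ln 2 + ln (\<Prod>k=1..n+1. 4*(real k)^2/(4*(real k)^2 - 1)) + ln ((2*real (n+1)+1)/real (n+1)))/2)"
    by (rule ext, rule la_2n) simp
  have lim3: "(\<lambda>n. 2 * la (n+1) - la (2*(n+1))) \<longlonglongrightarrow> ln (2*pi)/2"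
    unfolding eq using lim2 unfolding ce .
  have LL: "L = ln (2*pi)/2" using LIMSEQ_unique[OF lim1 lim3] by simp
  have "(la \<longlongrightarrow> ln (2*pi)/2) sequentially"
    using L(1) LL LIMSEQ_offset[of la 1] by simp
  moreover have "ln (2*pi)/2 \<le> la n" if "n \<ge> 1" for n
    using L(2) LL that by (metis le_add_diff_inverse2)
  ultimately show ?thesis by blast
qed

lemma la_tend: "(la \<longlongrightarrow> ln (2*pi)/2) sequentially"
  using la_limit_both by blast

lemma la_ge: "n \<ge> 1 \<Longrightarrow> ln (2*pi)/2 \<le> la n"
  using la_limit_both by blast


lemma fact_la:
  assumes "n \<ge> 1"
  shows "(fact n :: real) = exp (la n) * real n ^ n * sqrt (real n) / exp (real n)"
proof -
  have pos: "real n > 0" using assms by simp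
  have e1: "(real n + 1/2) * ln (real n) = ln (real n ^ n) + ln (sqrt (real n))"
    using pos by (simp add: ln_realpow ln_sqrt algebra_simps)
  have "exp (la n) = exp (ln (fact n)) * exp (real n) / exp ((real n + 1/2) * ln (real n))"
    unfolding la_def by (simp add: exp_add exp_diff)
  also have "\<dots> = fact n * exp (real n) / (real n ^ n * sqrt (real n))"
    unfolding e1 using pos by (simp add: exp_add)
  finally show ?thesis using pos by (simp add: field_simps)
qed

lemma fact_lower:
  assumes "n \<ge> 1"
  shows "sqrt (2*pi) * real n ^ n * sqrt (real n) / exp (real n) \<le> (fact n :: real)"
proof -
  have "exp (ln (2*pi)/2) \<le> exp (la n)" using la_ge[OF assms] by simp
  moreover have "exp (ln (2*pi)/2) = sqrt (2*pi)"
    by (simp add: exp_ln_iff ln_sqrt[symmetric] pi_gt_zero)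
  ultimately have "sqrt (2*pi) \<le> exp (la n)" by simp
  then show ?thesis unfolding fact_la[OF assms]
    by (intro divide_right_mono mult_right_mono) auto
qed

lemma gibbs:
  fixes x y :: real and m k :: nat
  assumes "x > 0" "y > 0" "m > 0" "k > 0" "x + y = real m + real k"
  shows "x ^ m * y ^ k \<le> real m ^ m * real k ^ k"
proof -
  have a: "ln (x / real m) \<le> x / real m - 1" using assms by (intro ln_le_minus_one) auto
  have b: "ln (y / real k) \<le> y / real k - 1" using assms by (intro ln_le_minus_one) auto
  have "real m * ln (x / real m) \<le> real m * (x / real m - 1)" using a by (intro mult_left_mono) auto
  moreover have "real k * ln (y / real k) \<le> real k * (y / real k - 1)" using b by (intro mult_left_mono) auto
  moreover have "real m * (x / real m - 1) = x - real m" "real k * (y / real k - 1) = y - real k"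
    using assms by (simp_all add: field_simps)
  ultimately have "real m * ln (x / real m) + real k * ln (y / real k) \<le> 0"
    using assms by linarith
  then have "real m * ln x + real k * ln y \<le> real m * ln (real m) + real k * ln (real k)"
    using assms by (simp add: ln_div algebra_simps)
  then have "ln (x ^ m * y ^ k) \<le> ln (real m ^ m * real k ^ k)"
    using assms by (simp add: ln_mult ln_realpow)
  then show ?thesis using assms by simp
qed


definition bn :: "nat \<Rightarrow> real \<Rightarrow> nat \<Rightarrow> real" where
  "bn n p k = real (n choose k) * p^k * (1-p)^(n-k)"

lemma bn_ratio:
  assumes "k < n"
  shows "bn n p (Suc k) * (real (Suc k) * (1-p)) = bn n p k * (real (n-k) * p)"
proof -
  have c: "Suc k * (n choose Suc k) = (n - k) * (n choose k)"
    using binomial_absorption[of k n] binomial_absorb_comp[of n k] by simp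
  then have c': "real (Suc k) * real (n choose Suc k) = real (n - k) * real (n choose k)"
    by (metis of_nat_mult)
  have e: "n - k = Suc (n - Suc k)" using assms by simp
  have "bn n p (Suc k) * (real (Suc k) * (1-p)) = (real (Suc k) * real (n choose Suc k)) * p^Suc k * (1-p)^(n - k)"
    unfolding bn_def e by (simp add: algebra_simps)
  also have "\<dots> = bn n p k * (real (n-k) * p)"
    unfolding c' bn_def by (simp add: algebra_simps)
  finally show ?thesis .
qed

lemma bn_nonneg: "0 \<le> p \<Longrightarrow> p \<le> 1 \<Longrightarrow> 0 \<le> bn n p k"
  unfolding bn_def by simp

lemma bn_mode:
  assumes p: "0 < p" "p < 1" and k: "k \<le> n"
  defines "m \<equiv> nat \<lfloor>(real n + 1) * p\<rfloor>"
  shows "bn n p k \<le> bn n p m"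
proof -
  have m1: "real m \<le> (real n + 1) * p" "(real n + 1) * p < real m + 1"
    unfolding m_def using p by (simp_all add: of_nat_nat)
  have mn: "m \<le> n"
  proof -
    have "(real n + 1) * p < real n + 1" using p by simp
    then have "real m < real n + 1" using m1 by linarith
    then show ?thesis by simp
  qed
  have inc: "bn n p j \<le> bn n p (Suc j)" if "j < m" for j
  proof -
    have jn: "j < n" using that mn by simp
    have "real (Suc j) \<le> (real n + 1) * p" using that m1 by linarith
    then have le: "real (Suc j) * (1-p) \<le> real (n-j) * p"
      using jn by (simp add: of_nat_diff algebra_simps)
    have "bn n p j * (real (Suc j) * (1-p)) \<le> bn n p j * (real (n-j) * p)"
      using le bn_nonneg[of p n j] p by (intro mult_left_mono) auto
    also have "\<dots> = bn n p (Suc j) * (real (Suc j) * (1-p))" using bn_ratio[OF jn] by simp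
    finally show ?thesis using p by (simp add: mult_le_cancel_right)
  qed
  have dec: "bn n p (Suc j) \<le> bn n p j" if "m \<le> j" "j < n" for j
  proof -
    have "(real n + 1) * p < real (Suc j)" using that m1 by simp
    then have le: "real (n-j) * p \<le> real (Suc j) * (1-p)"
      using that by (simp add: of_nat_diff algebra_simps)
    have "bn n p (Suc j) * (real (Suc j) * (1-p)) = bn n p j * (real (n-j) * p)" using bn_ratio[OF that(2)] .
    also have "\<dots> \<le> bn n p j * (real (Suc j) * (1-p))"
      using le bn_nonneg[of p n j] p by (intro mult_left_mono) auto
    finally show ?thesis using p by (simp add: mult_le_cancel_right)
  qed
  show ?thesis
  proof (cases "k \<le> m")
    case True
    show ?thesis using True
    proof (induction k rule: inc_induct)
      case base then show ?case by simp
    next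
      case (step j) then show ?case using inc[of j] by simp
    qed
  next
    case False
    then have "m \<le> k" by simp
    then show ?thesis using k
    proof (induction k rule: dec_induct)
      case base then show ?case by simp
    next
      case (step j) then show ?case using dec[of j] by simp
    qed
  qed
qed



lemma mk_bound:
  fixes p :: real
  assumes p: "0 < p" "p < 1" and mn: "m \<le> n" and e: "\<bar>real m - real n * p\<bar> \<le> 1" and n: "n \<ge> 1"
  shows "real n ^ 2 * (p*(1-p)) - 2 * real n \<le> real m * real (n - m)"
proof -
  define e where "e = real m - real n * p"
  have rm: "real m = real n * p + e" unfolding e_def by simp
  have rk: "real (n - m) = real n * (1-p) - e" using mn unfolding e_def by (simp add: of_nat_diff algebra_simps)
  have "real m * real (n - m) = real n ^ 2 * (p*(1-p)) + e * real n * (1 - 2*p) - e^2"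
    unfolding rm rk by (simp add: algebra_simps power2_eq_square)
  moreover have T: "\<bar>e * real n * (1 - 2*p)\<bar> \<le> real n"
  proof -
    have "\<bar>e * real n * (1 - 2*p)\<bar> = \<bar>e\<bar> * real n * \<bar>1 - 2*p\<bar>" by (simp add: abs_mult)
    also have "\<dots> \<le> 1 * real n * 1"
      using e p unfolding e_def by (intro mult_mono) auto
    finally show ?thesis by simp
  qed
  moreover have "e^2 \<le> 1" using e unfolding e_def by (simp add: abs_square_le_1)
  moreover have "- (e * real n * (1 - 2*p)) \<le> real n" using abs_le_D2[OF T] .
  moreover have "1 \<le> real n" using n by simp
  ultimately show ?thesis by linarith
qed

lemma alg_aux:
  fixes E nm nk sn en pm qk s Mm sm em Kk sk ek :: real
  assumes "em * ek = en" "s > 0" "Mm > 0" "sm > 0" "em > 0" "Kk > 0" "sk > 0" "ek > 0"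
  shows "E * (nm * nk) * sn / en * (pm * qk) / ((s * Mm * sm / em) * (s * Kk * sk / ek)) =
         E / (s * s) * (sn / (sm * sk)) * ((nm * pm) * (nk * qk) / (Mm * Kk))"
  using assms by (simp add: field_simps) (simp add: assms(1)[symmetric] algebra_simps)

lemma sqrt_div_aux:
  fixes x y :: real assumes "0 < x" shows "sqrt x / (x*y) = 1/y/sqrt x"
proof -
  have "sqrt x / (x*y) = sqrt x / (sqrt x * sqrt x * y)" using assms by simp
  also have "\<dots> = 1/y/sqrt x" using assms by (cases "y = 0") (simp_all add: field_simps)
  finally show ?thesis .
qed

lemma bn_stirling:
  fixes p :: real
  assumes p: "0 < p" "p < 1" and m1: "1 \<le> m" and mn: "m < n"
    and e: "\<bar>real m - real n * p\<bar> \<le> 1" and pos: "p*(1-p) - 2/real n > 0"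
  shows "bn n p m \<le> exp (la n) / (2*pi) / sqrt (p*(1-p) - 2/real n) / sqrt (real n)"
proof -
  define k where "k = n - m"
  have k1: "1 \<le> k" using mn unfolding k_def by simp
  have n1: "1 \<le> n" using mn m1 by simp
  have nmk: "n = m + k" using mn unfolding k_def by simp
  define q where "q = 1 - p"
  have q: "0 < q" using p unfolding q_def by simp
  let ?s = "sqrt (2*pi)"
  have spos: "?s > 0" by (simp add: pi_gt_zero)
  have fm: "?s * real m ^ m * sqrt (real m) / exp (real m) \<le> fact m" using fact_lower[OF m1] .
  have fk: "?s * real k ^ k * sqrt (real k) / exp (real k) \<le> fact k" using fact_lower[OF k1] .
  have prodl: "(?s * real m ^ m * sqrt (real m) / exp (real m)) * (?s * real k ^ k * sqrt (real k) / exp (real k))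
      \<le> fact m * fact k"
    using fm fk m1 k1 spos by (intro mult_mono) auto
  have lpos: "0 < (?s * real m ^ m * sqrt (real m) / exp (real m)) * (?s * real k ^ k * sqrt (real k) / exp (real k))"
    using m1 k1 spos by simp
  have C: "real (n choose m) = fact n / (fact m * fact k)"
    unfolding k_def using mn by (simp add: binomial_fact)
  have "bn n p m = fact n * (p^m * q^k) / (fact m * fact k)"
    unfolding bn_def C q_def k_def by simp
  also have "\<dots> \<le> fact n * (p^m * q^k) / ((?s * real m ^ m * sqrt (real m) / exp (real m)) * (?s * real k ^ k * sqrt (real k) / exp (real k)))"
  proof (rule divide_left_mono[OF prodl])
    show "0 \<le> fact n * (p^m * q^k)" using p q by simp
    show "0 < fact m * fact k * ((?s * real m ^ m * sqrt (real m) / exp (real m)) * (?s * real k ^ k * sqrt (real k) / exp (real k)))"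
      by (rule mult_pos_pos[OF _ lpos]) simp
  qed
  also have "\<dots> = exp (la n) / (2*pi) * (sqrt (real n) / (sqrt (real m) * sqrt (real k))) *
       (((real n * p)^m * (real n * q)^k) / (real m ^ m * real k ^ k))"
  proof -
    have ss: "?s * ?s = 2*pi" by (simp add: pi_gt_zero)
    have "fact n * (p^m * q^k) / ((?s * real m ^ m * sqrt (real m) / exp (real m)) * (?s * real k ^ k * sqrt (real k) / exp (real k)))
      = exp (la n) * (real n ^ m * real n ^ k) * sqrt (real n) / exp (real n) * (p^m * q^k) / ((?s * real m ^ m * sqrt (real m) / exp (real m)) * (?s * real k ^ k * sqrt (real k) / exp (real k)))"
      unfolding fact_la[OF n1] by (simp add: nmk power_add)
    also have "\<dots> = exp (la n) / (?s * ?s) * (sqrt (real n) / (sqrt (real m) * sqrt (real k))) *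
       ((real n ^ m * p^m) * (real n ^ k * q^k) / (real m ^ m * real k ^ k))"
      by (rule alg_aux) (use m1 k1 spos in \<open>auto simp: nmk exp_add\<close>)
    finally show ?thesis unfolding ss by (simp add: power_mult_distrib)
  qed
  also have "\<dots> \<le> exp (la n) / (2*pi) * (sqrt (real n) / (sqrt (real m) * sqrt (real k))) * 1"
  proof -
    have "(real n * p)^m * (real n * q)^k \<le> real m ^ m * real k ^ k"
    proof (rule gibbs)
      show "0 < real n * p" "0 < real n * q" using n1 p q by auto
      show "0 < m" "0 < k" using m1 k1 by auto
      have "real n = real m + real k" using nmk by simp
      then show "real n * p + real n * q = real m + real k" unfolding q_def by (simp add: algebra_simps)
    qed
    then have "((real n * p)^m * (real n * q)^k) / (real m ^ m * real k ^ k) \<le> 1"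
      using m1 k1 by simp
    then show ?thesis by (intro mult_left_mono) (auto simp: pi_gt_zero)
  qed
  also have "\<dots> \<le> exp (la n) / (2*pi) * (1 / sqrt (p*(1-p) - 2/real n) / sqrt (real n))"
  proof -
    have mk: "real n ^ 2 * (p*(1-p)) - 2 * real n \<le> real m * real k"
      using mk_bound[OF p _ e n1] mn unfolding k_def by simp
    have "real n ^ 2 * (p*(1-p) - 2/real n) \<le> real m * real k"
      using mk n1 by (simp add: algebra_simps power2_eq_square)
    then have "sqrt (real n ^ 2 * (p*(1-p) - 2/real n)) \<le> sqrt (real m * real k)"
      by simp
    then have "real n * sqrt (p*(1-p) - 2/real n) \<le> sqrt (real m) * sqrt (real k)"
      by (simp add: real_sqrt_mult)
    then have "sqrt (real n) / (sqrt (real m) * sqrt (real k)) \<le> sqrt (real n) / (real n * sqrt (p*(1-p) - 2/real n))"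
      using pos n1 m1 k1 by (intro divide_left_mono mult_pos_pos) auto
    also have "\<dots> = 1 / sqrt (p*(1-p) - 2/real n) / sqrt (real n)"
      by (rule sqrt_div_aux) (use n1 in simp)
    finally have "sqrt (real n) / (sqrt (real m) * sqrt (real k)) \<le> 1 / sqrt (p*(1-p) - 2/real n) / sqrt (real n)" .
    then show ?thesis unfolding mult_1_right by (intro mult_left_mono) (auto simp: pi_gt_zero)
  qed
  finally show ?thesis by simp
qed



lemma tail_bound:
  fixes p :: real
  assumes p: "0 < p" "p < 1" and n: "n > 0"
  shows "(\<Sum>k\<in>{k. k \<le> n \<and> sqrt (real n) \<le> \<bar>real k - real n * p\<bar>}. bn n p k) \<le> 2 * exp (-2)"
proof -
  have sp: "set_pmf (binomial_pmf n p) = {..n}" by (rule set_pmf_binomial) (use p in auto)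
  interpret binomial_distribution n p using p by unfold_locales auto
  have "measure_pmf.prob (binomial_pmf n p) {x. sqrt (real n) \<le> \<bar>real x - real n * p\<bar>} \<le> 2 * exp (- 2 * (sqrt (real n))\<^sup>2 / real n)"
    by (rule prob_abs_ge[OF n]) simp
  also have "- 2 * (sqrt (real n))\<^sup>2 / real n = -2" using n by simp
  finally have h: "measure_pmf.prob (binomial_pmf n p) {x. sqrt (real n) \<le> \<bar>real x - real n * p\<bar>} \<le> 2 * exp (-2)" .
  have "measure_pmf.prob (binomial_pmf n p) {x. sqrt (real n) \<le> \<bar>real x - real n * p\<bar>}
      = measure_pmf.prob (binomial_pmf n p) ({x. sqrt (real n) \<le> \<bar>real x - real n * p\<bar>} \<inter> set_pmf (binomial_pmf n p))"
    by (rule measure_Int_set_pmf[symmetric])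
  also have "{x. sqrt (real n) \<le> \<bar>real x - real n * p\<bar>} \<inter> set_pmf (binomial_pmf n p) = {k. k \<le> n \<and> sqrt (real n) \<le> \<bar>real k - real n * p\<bar>}"
    using sp by auto
  also have "measure_pmf.prob (binomial_pmf n p) {k. k \<le> n \<and> sqrt (real n) \<le> \<bar>real k - real n * p\<bar>}
     = (\<Sum>k\<in>{k. k \<le> n \<and> sqrt (real n) \<le> \<bar>real k - real n * p\<bar>}. pmf (binomial_pmf n p) k)"
    by (rule measure_measure_pmf_finite) simp
  also have "\<dots> = (\<Sum>k\<in>{k. k \<le> n \<and> sqrt (real n) \<le> \<bar>real k - real n * p\<bar>}. bn n p k)"
    using p by (intro sum.cong) (auto simp: bn_def)
  finally show ?thesis using h by simp
qed

lemma bn_sum: "(\<Sum>k\<le>n. bn n p k) = 1"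
  using binomial_ring[of p "1-p" n] unfolding bn_def by simp

lemma card_interval_aux:
  fixes S :: "nat set" and a L :: real
  assumes "\<And>k. k \<in> S \<Longrightarrow> a \<le> real k \<and> real k \<le> a + L" and "L \<ge> 0"
  shows "real (card S) \<le> L + 1"
proof -
  define l where "l = nat \<lceil>a\<rceil>"
  define t where "t = nat \<lfloor>L\<rfloor>"
  have sub: "S \<subseteq> {l..l+t}"
  proof
    fix k assume k: "k \<in> S"
    have ak: "a \<le> real k" using assms(1)[OF k] by simp
    then have kl: "l \<le> k" unfolding l_def by (simp add: nat_le_iff ceiling_le_iff)
    have "a \<le> real l" unfolding l_def by (rule real_nat_ceiling_ge)
    then have "real k - real l \<le> L" using assms(1)[OF k] by simp
    then have "real (k - l) \<le> L" using kl by (simp add: of_nat_diff)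
    then have "k - l \<le> t" unfolding t_def by (simp add: le_nat_floor)
    then show "k \<in> {l..l+t}" using kl by simp
  qed
  have "card S \<le> card {l..l+t}" by (rule card_mono) (use sub in auto)
  also have "card {l..l+t} = t + 1" by simp
  finally have "real (card S) \<le> real t + 1" by linarith
  also have "real t \<le> L" unfolding t_def using assms(2) by (simp add: of_nat_nat)
  finally show ?thesis by simp
qed

lemma convex_pow_nonneg: "convex_on {0::real..} (\<lambda>x. x ^ d)"
proof (cases "even d")
  case True
  then show ?thesis using convex_power_even convex_on_subset by blast
next
  case False
  then show ?thesis using convex_power_odd by blast
qed

lemma power_mean_aux:
  fixes f :: "nat \<Rightarrow> real"
  assumes S: "finite S" "S \<noteq> {}" and f: "\<And>i. i \<in> S \<Longrightarrow> 0 \<le> f i" and d: "d \<ge> 1"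
  shows "(\<Sum>i\<in>S. f i) ^ d \<le> real (card S) ^ (d-1) * (\<Sum>i\<in>S. f i ^ d)"
proof -
  define c where "c = real (card S)"
  have c: "c > 0" unfolding c_def using S by (simp add: card_gt_0_iff)
  have "(\<Sum>i\<in>S. (1/c) *\<^sub>R f i) ^ d \<le> (\<Sum>i\<in>S. (1/c) * f i ^ d)"
    using convex_on_sum[OF S convex_pow_nonneg, of "\<lambda>_. 1/c" f] f c unfolding c_def by auto
  then have "(\<Sum>i\<in>S. f i) ^ d / c ^ d \<le> (\<Sum>i\<in>S. f i ^ d) / c"
    by (simp add: sum_divide_distrib[symmetric] power_divide)
  then have "(\<Sum>i\<in>S. f i) ^ d \<le> (\<Sum>i\<in>S. f i ^ d) / c * c ^ d"
    using c by (simp add: divide_le_eq)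
  also have "c ^ d = c * c ^ (d-1)" using d by (metis Suc_diff_le diff_Suc_1 power_Suc)
  also have "(\<Sum>i\<in>S. f i ^ d) / c * (c * c ^ (d-1)) = c ^ (d-1) * (\<Sum>i\<in>S. f i ^ d)"
    using c by (simp add: field_simps)
  finally show ?thesis unfolding c_def .
qed


lemma sum_pow_lower:
  fixes p :: real
  assumes p: "0 < p" "p < 1" and n: "n \<ge> 1" and d: "d \<ge> 1"
  shows "(1/2)^d / (3 * sqrt (real n))^(d-1) \<le> (\<Sum>k\<le>n. bn n p k ^ d)"
proof -
  define W where "W = {k. k \<le> n \<and> \<bar>real k - real n * p\<bar> < sqrt (real n)}"
  define T where "T = {k. k \<le> n \<and> sqrt (real n) \<le> \<bar>real k - real n * p\<bar>}"
  have fin: "finite W" "finite T" unfolding W_def T_def by auto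
  have un: "{..n} = W \<union> T" "W \<inter> T = {}" unfolding W_def T_def by auto
  have nn: "\<And>k. 0 \<le> bn n p k" using p by (intro bn_nonneg) auto
  have "1 = (\<Sum>k\<le>n. bn n p k)" using bn_sum by simp
  also have "\<dots> = (\<Sum>k\<in>W. bn n p k) + (\<Sum>k\<in>T. bn n p k)"
    unfolding un(1) by (rule sum.union_disjoint[OF fin un(2)])
  finally have s1: "1 = (\<Sum>k\<in>W. bn n p k) + (\<Sum>k\<in>T. bn n p k)" .
  have tb: "(\<Sum>k\<in>T. bn n p k) \<le> 2 * exp (-2)" unfolding T_def using tail_bound[OF p] n by simp
  have e1: "2 \<le> exp (1::real)" using exp_ge_add_one_self[of 1] by simp
  have "2 * 2 \<le> exp (1::real) * exp 1" using e1 by (intro mult_mono) auto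
  then have "4 \<le> exp (2::real)" by (simp add: exp_add[symmetric])
  then have "2 * exp (-2::real) \<le> 1/2" by (simp add: exp_minus field_simps)
  with s1 tb have mass: "1/2 \<le> (\<Sum>k\<in>W. bn n p k)" by linarith
  have Wne: "W \<noteq> {}" using mass by auto
  have sn: "1 \<le> sqrt (real n)" using n by simp
  have cW: "real (card W) \<le> 2 * sqrt (real n) + 1"
    by (rule card_interval_aux[where a = "real n * p - sqrt (real n)"]) (auto simp: W_def)
  have cW3: "real (card W) \<le> 3 * sqrt (real n)" using cW sn by linarith
  have cWpos: "0 < real (card W)" using Wne fin by (simp add: card_gt_0_iff)
  have "(1/2)^d \<le> (\<Sum>k\<in>W. bn n p k) ^ d" using mass by (intro power_mono) auto
  also have "\<dots> \<le> real (card W) ^ (d-1) * (\<Sum>k\<in>W. bn n p k ^ d)"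
    by (rule power_mean_aux[OF fin(1) Wne nn d])
  also have "\<dots> \<le> (3 * sqrt (real n)) ^ (d-1) * (\<Sum>k\<in>W. bn n p k ^ d)"
    using cW3 cWpos nn by (intro mult_right_mono power_mono sum_nonneg zero_le_power) auto
  also have "(\<Sum>k\<in>W. bn n p k ^ d) \<le> (\<Sum>k\<le>n. bn n p k ^ d)"
    using nn by (intro sum_mono2) (auto simp: W_def)
  then have "(3 * sqrt (real n)) ^ (d-1) * (\<Sum>k\<in>W. bn n p k ^ d) \<le> (3 * sqrt (real n)) ^ (d-1) * (\<Sum>k\<le>n. bn n p k ^ d)"
    using sn by (intro mult_left_mono) auto
  finally have "(1/2)^d \<le> (3 * sqrt (real n)) ^ (d-1) * (\<Sum>k\<le>n. bn n p k ^ d)" .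
  then show ?thesis using sn by (simp add: divide_le_eq mult.commute)
qed



lemma powr_sqrt_aux:
  assumes n: "n \<ge> 1" and d: "d \<ge> 1"
  shows "real n powr (- (real d - 1) / 2) = 1 / sqrt (real n) ^ (d - 1)"
proof -
  have "sqrt (real n) ^ (d - 1) = (real n powr (1/2)) ^ (d-1)" by (simp add: powr_half_sqrt)
  also have "\<dots> = real n powr (real (d-1) * (1/2))" using n by (subst powr_power) auto
  also have "real (d-1) * (1/2) = (real d - 1)/2" using d by (simp add: of_nat_diff)
  finally have e: "sqrt (real n) ^ (d - 1) = real n powr ((real d - 1)/2)" .
  have m: "- (real d - 1) / 2 = - ((real d - 1) / 2)" by (rule minus_divide_left[symmetric])
  show ?thesis unfolding e m by (rule powr_minus_divide)
qed

lemma const_aux: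
  fixes r :: real assumes r: "r > 0"
  defines "c \<equiv> (r + 1) / sqrt (2 * pi * r) * exp (- ((r + 1)^2 / (2 * r)))"
  shows "0 \<le> c" "c \<le> 1/6"
proof -
  show c0: "0 \<le> c" unfolding c_def using r by simp
  define x where "x = (r+1)^2 / r"
  have x4: "x \<ge> 4"
  proof -
    have "(r+1)^2 - 4*r = (r-1)^2" by (simp add: power2_eq_square algebra_simps)
    then have "4 * r \<le> (r+1)^2" using zero_le_power2[of "r-1"] by linarith
    then show ?thesis unfolding x_def using r by (simp add: le_divide_eq)
  qed
  have c2: "c^2 = x / (2*pi) * exp (-x)"
  proof -
    have "c^2 = ((r+1)^2 / (2*pi*r)) * (exp (- ((r + 1)^2 / (2 * r))))^2"
      unfolding c_def using r by (simp add: power_mult_distrib power_divide pi_gt_zero)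
    also have "(exp (- ((r + 1)^2 / (2 * r))))^2 = exp (-x)"
    proof -
      have "- ((r + 1)^2 / (2 * r)) + - ((r + 1)^2 / (2 * r)) = -x" unfolding x_def by simp
      then show ?thesis by (simp only: power2_eq_square exp_add[symmetric])
    qed
    also have "(r+1)^2 / (2*pi*r) = x / (2*pi)" unfolding x_def by simp
    finally show ?thesis .
  qed
  have ex: "6 * x \<le> exp x"
  proof -
    have q: "1 + x/2 + (x/2)^2/2 \<le> exp (x/2)" by (rule exp_lower_Taylor_quadratic) (use x4 in simp)
    define y where "y = x - 4"
    have y: "y \<ge> 0" using x4 unfolding y_def by simp
    have xy: "x = y + 4" unfolding y_def by simp
    have "1 + x/2 + (x/2)^2/2 = 5 + 3/2*y + y^2/8" unfolding xy by (simp add: power2_eq_square field_simps)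
    then have "5 + 3/2*y \<le> 1 + x/2 + (x/2)^2/2" using zero_le_power2[of y] by linarith
    with q have a: "5 + 3/2*y \<le> exp (x/2)" by linarith
    have "(5 + 3/2*y)^2 = 25 + 15*y + 9/4*y^2" by (simp add: power2_eq_square field_simps)
    moreover have "6 * x = 24 + 6 * y" unfolding xy by simp
    ultimately have "6 * x \<le> (5 + 3/2*y)^2" using zero_le_power2[of y] y by linarith
    also have "\<dots> \<le> (exp (x/2))^2" using a y by (intro power_mono) auto
    also have "\<dots> = exp x" by (simp add: power2_eq_square exp_add[symmetric])
    finally show ?thesis .
  qed
  have "c^2 \<le> (1/6)^2"
  proof -
    have "x / (2*pi) * exp (-x) = x / (2 * pi * exp x)" by (simp add: exp_minus field_simps)
    also have "\<dots> \<le> x / (6 * (6 * x))"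
    proof (rule divide_left_mono)
      have "6 * (6*x) \<le> 6 * exp x" using ex by simp
      also have "\<dots> \<le> 2 * pi * exp x" using pi_gt3 by (intro mult_right_mono) auto
      finally show "6 * (6 * x) \<le> 2 * pi * exp x" .
      show "0 \<le> x" using x4 by simp
      show "0 < 2 * pi * exp x * (6 * (6 * x))" using x4 by (simp add: pi_gt_zero)
    qed
    also have "\<dots> = (1/6)^2" using x4 by (simp add: power2_eq_square)
    finally show ?thesis using c2 by simp
  qed
  then show "c \<le> 1/6" by (rule power2_le_imp_le) simp
qed


lemma sum_identity:
  fixes r :: real and d n :: nat
  assumes r: "r > 0"
  shows "(\<Sum>k=0..n. real (n choose k) ^ d * (r^d) ^ k) = (1 + r) ^ (d * n) * (\<Sum>k\<le>n. bn n (r/(1+r)) k ^ d)"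
proof -
  have b: "bn n (r/(1+r)) k = real (n choose k) * r^k / (1+r)^n" if "k \<le> n" for k
  proof -
    have "1 - r/(1+r) = 1/(1+r)" using r by (simp add: field_simps)
    then have "bn n (r/(1+r)) k = real (n choose k) * (r^k / (1+r)^k) * (1 / (1+r)^(n-k))"
      unfolding bn_def by (simp add: power_divide)
    also have "\<dots> = real (n choose k) * r^k / ((1+r)^k * (1+r)^(n-k))" by simp
    also have "(1+r)^k * (1+r)^(n-k) = (1+r)^n" using that by (simp add: power_add[symmetric])
    finally show ?thesis .
  qed
  have "(\<Sum>k=0..n. real (n choose k) ^ d * (r^d) ^ k) = (\<Sum>k\<le>n. (1 + r) ^ (d * n) * bn n (r/(1+r)) k ^ d)"
  proof (unfold atLeast0AtMost, intro sum.cong refl)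
    fix k assume k: "k \<in> {..n}"
    have "(1 + r) ^ (d * n) * bn n (r/(1+r)) k ^ d = ((1+r)^n * bn n (r/(1+r)) k) ^ d"
      by (simp add: power_mult_distrib power_mult[symmetric] mult.commute)
    also have "(1+r)^n * bn n (r/(1+r)) k = real (n choose k) * r^k" using b[of k] k r by simp
    finally show "real (n choose k) ^ d * (r^d) ^ k = (1 + r) ^ (d * n) * bn n (r/(1+r)) k ^ d"
      by (simp add: power_mult_distrib power_mult[symmetric] mult.commute)
  qed
  then show ?thesis by (simp add: sum_distrib_left)
qed


theorem proposition7:
  fixes d :: nat and p :: "nat \<Rightarrow> real" and P :: real
  assumes "d \<ge> 3"
    and "\<forall>j\<in>{1..d}. 0 < p j \<and> p j < 1"
    and "P = (\<Prod>j=1..d. p j / (1 - p j))"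
  shows "\<exists>\<epsilon> \<delta> :: nat \<Rightarrow> real. \<epsilon> \<longlonglongrightarrow> 0 \<and> \<delta> \<longlonglongrightarrow> 0 \<and>
    (\<forall>\<^sub>F n in sequentially.
      (\<Sum>k=0..n. real (n choose k) ^ d * P ^ k)
        \<le> ((root d P + 1) / sqrt (2 * pi * root d P) + \<epsilon> n) ^ (d - 1)
           * real n powr (- (real d - 1) / 2) * (1 + root d P) ^ (d * n)
    \<and> (\<Sum>k=0..n. real (n choose k) ^ d * P ^ k)
        \<ge> ((root d P + 1) / sqrt (2 * pi * root d P)
              * exp (- ((root d P + 1)^2 / (2 * root d P))) + \<delta> n) ^ d
           * real n powr (- (real d - 1) / 2) * (1 + root d P) ^ (d * n))"
proof -
  have d1: "d \<ge> 1" and d0: "0 < d" using assms(1) by auto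
  have Ppos: "P > 0" unfolding assms(3)
    using assms(2) by (intro prod_pos) (auto intro!: divide_pos_pos)
  define r where "r = root d P"
  have r: "r > 0" unfolding r_def using Ppos d0 by simp
  have rd: "r ^ d = P" unfolding r_def using Ppos d0 by (simp add: real_root_pow_pos)
  define pp where "pp = r / (1 + r)"
  have pp: "0 < pp" "pp < 1" unfolding pp_def using r by auto
  have q: "1 - pp = 1 / (1 + r)" unfolding pp_def using r by (simp add: field_simps)
  define c where "c = (r + 1) / sqrt (2 * pi * r)"
  define U where "U = (\<lambda>n. exp (la n) / (2*pi) / sqrt (pp*(1-pp) - 2/real n))"
  define \<epsilon> where "\<epsilon> = (\<lambda>n. U n - c)"
  define \<delta> :: "nat \<Rightarrow> real" where "\<delta> = (\<lambda>n. 0)"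
  have ppq: "pp * (1 - pp) > 0" using pp by simp
  have Ulim: "U \<longlonglongrightarrow> exp (ln (2*pi)/2) / (2*pi) / sqrt (pp*(1-pp) - 0)"
    unfolding U_def
    by (intro tendsto_intros la_tend tendsto_divide_0[OF tendsto_const] filterlim_real_sequentially)
       (use ppq in auto)
  have cval: "exp (ln (2*pi)/2) / (2*pi) / sqrt (pp*(1-pp) - 0) = c"
  proof -
    have e: "exp (ln (2*pi)/2) = sqrt (2*pi)"
      by (simp add: exp_ln_iff ln_sqrt[symmetric] pi_gt_zero)
    have s1: "sqrt (2*pi) / (2*pi) = 1 / sqrt (2*pi)"
    proof -
      have "2*pi = sqrt (2*pi) * sqrt (2*pi)" by (simp add: pi_gt_zero)
      then show ?thesis by (metis divide_divide_eq_right divide_self_if mult_cancel_left1 times_divide_eq_right div_by_1 sqrt_divide_self_eq)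
    qed
    have "pp * (1 - pp) = r / (1+r)^2" unfolding q unfolding pp_def by (simp add: power2_eq_square)
    then have s2: "sqrt (pp*(1-pp) - 0) = sqrt r / (1 + r)" using r by (simp add: real_sqrt_divide)
    show ?thesis unfolding e s1 s2 c_def using r
      by (simp add: real_sqrt_mult field_simps)
  qed
  have elim: "\<epsilon> \<longlonglongrightarrow> 0"
  proof -
    have "(\<lambda>n. U n - c) \<longlonglongrightarrow> c - c" using Ulim unfolding cval by (intro tendsto_intros)
    then show ?thesis unfolding \<epsilon>_def by simp
  qed
  have dlim: "\<delta> \<longlonglongrightarrow> 0" unfolding \<delta>_def by simp
  obtain N :: nat where N: "1/pp + r + 2/(pp*(1-pp)) + 1 < real N"
    using reals_Archimedean2 by blast
  have ev: "\<forall>\<^sub>F n in sequentially.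
      (\<Sum>k=0..n. real (n choose k) ^ d * P ^ k)
        \<le> (c + \<epsilon> n) ^ (d - 1) * real n powr (- (real d - 1) / 2) * (1 + r) ^ (d * n)
    \<and> (\<Sum>k=0..n. real (n choose k) ^ d * P ^ k)
        \<ge> ((r + 1) / sqrt (2 * pi * r) * exp (- ((r + 1)^2 / (2 * r))) + \<delta> n) ^ d
           * real n powr (- (real d - 1) / 2) * (1 + r) ^ (d * n)"
  proof (rule eventually_mono[OF eventually_ge_at_top[of N]])
    fix n assume nN: "N \<le> n"
    have nN': "1/pp + r + 2/(pp*(1-pp)) + 1 < real n" using N nN by linarith
    have pos1: "0 < 1/pp" "0 < 2/(pp*(1-pp))" using pp ppq by auto
    have n1: "n \<ge> 1" using nN' pos1 r by linarith
    have S: "(\<Sum>k=0..n. real (n choose k) ^ d * P ^ k) = (1 + r) ^ (d * n) * (\<Sum>k\<le>n. bn n pp k ^ d)"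
      unfolding rd[symmetric] pp_def by (rule sum_identity[OF r])
    have pw: "real n powr (- (real d - 1) / 2) = 1 / sqrt (real n) ^ (d - 1)"
      by (rule powr_sqrt_aux[OF n1 d1])
    have sn: "sqrt (real n) > 0" using n1 by simp
    have rpos: "0 < (1 + r) ^ (d * n)" using r by simp
    have nn: "\<And>k. 0 \<le> bn n pp k" using pp by (intro bn_nonneg) auto
    define m where "m = nat \<lfloor>(real n + 1) * pp\<rfloor>"
    have m1: "real m \<le> (real n + 1) * pp" "(real n + 1) * pp < real m + 1"
      unfolding m_def using pp by (simp_all add: of_nat_nat)
    have "1/pp < real n" using nN' r pos1 by linarith
    then have "1 < real n * pp" using pp by (simp add: field_simps)
    moreover have "(real n + 1) * pp = real n * pp + pp" by (simp add: algebra_simps)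
    ultimately have "0 < real m" using m1 pp by linarith
    then have mge: "1 \<le> m" by simp
    have "pp / (1 - pp) = r" unfolding q unfolding pp_def using r by (simp add: field_simps)
    moreover have "r < real n" using nN' pos1 by linarith
    ultimately have "r * (1 - pp) < real n * (1 - pp)" using pp by (intro mult_strict_right_mono) auto
    moreover have "r * (1 - pp) = pp" unfolding q unfolding pp_def using r by (simp add: field_simps)
    ultimately have "pp < real n * (1 - pp)" by simp
    then have "(real n + 1) * pp < real n" by (simp add: algebra_simps)
    then have mlt: "m < n" using m1 by simp
    have me: "\<bar>real m - real n * pp\<bar> \<le> 1" using m1 pp by (simp add: algebra_simps abs_le_iff)
    have "2/(pp*(1-pp)) < real n" using nN' pos1 r by linarith
    then have "2/real n < pp*(1-pp)" using ppq n1 by (simp add: field_simps)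
    then have ppos: "pp*(1-pp) - 2/real n > 0" by simp
    have bm: "bn n pp m \<le> U n / sqrt (real n)"
      unfolding U_def by (rule bn_stirling[OF pp mge mlt me ppos])
    have "(\<Sum>k\<le>n. bn n pp k ^ d) \<le> (\<Sum>k\<le>n. bn n pp m ^ (d-1) * bn n pp k)"
    proof (rule sum_mono)
      fix k assume k: "k \<in> {..n}"
      have "bn n pp k ^ d = bn n pp k ^ (d-1) * bn n pp k"
        using d1 by (metis Suc_diff_le diff_Suc_1 power_Suc2)
      also have "\<dots> \<le> bn n pp m ^ (d-1) * bn n pp k"
        using bn_mode[OF pp, of k n] k nn unfolding m_def by (intro mult_right_mono power_mono) auto
      finally show "bn n pp k ^ d \<le> bn n pp m ^ (d-1) * bn n pp k" .
    qed
    also have "\<dots> = bn n pp m ^ (d-1)" using bn_sum[of n pp] by (simp add: sum_distrib_left[symmetric])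
    also have "\<dots> \<le> (U n / sqrt (real n)) ^ (d-1)" using bm nn by (intro power_mono) auto
    also have "\<dots> = (c + \<epsilon> n) ^ (d - 1) * (1 / sqrt (real n) ^ (d - 1))"
      unfolding \<epsilon>_def by (simp add: power_divide)
    finally have up: "(\<Sum>k\<le>n. bn n pp k ^ d) \<le> (c + \<epsilon> n) ^ (d - 1) * (1 / sqrt (real n) ^ (d - 1))" .
    have upper: "(\<Sum>k=0..n. real (n choose k) ^ d * P ^ k)
        \<le> (c + \<epsilon> n) ^ (d - 1) * real n powr (- (real d - 1) / 2) * (1 + r) ^ (d * n)"
    proof -
      have "(1 + r) ^ (d * n) * (\<Sum>k\<le>n. bn n pp k ^ d) \<le> (1 + r) ^ (d * n) * ((c + \<epsilon> n) ^ (d - 1) * (1 / sqrt (real n) ^ (d - 1)))"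
        using mult_left_mono[OF up, of "(1+r)^(d*n)"] rpos by simp
      then show ?thesis unfolding S pw by (simp only: ac_simps)
    qed
    define K where "K = (r + 1) / sqrt (2 * pi * r) * exp (- ((r + 1)^2 / (2 * r)))"
    have K: "0 \<le> K" "K \<le> 1/6" unfolding K_def using const_aux[OF r] by auto
    have "(K + \<delta> n) ^ d = K ^ d" unfolding \<delta>_def by simp
    also have "\<dots> \<le> (1/6) ^ d" using K by (intro power_mono) auto
    also have "\<dots> \<le> (1/2)^d / 3^(d-1)"
    proof -
      have "(1/6::real) ^ d = (1/2)^d / 3^d"
        by (simp add: power_divide power_mult_distrib[symmetric])
      also have "\<dots> \<le> (1/2)^d / 3^(d-1)" by (intro divide_left_mono power_increasing) auto
      finally show ?thesis .
    qed
    finally have Kb: "(K + \<delta> n) ^ d \<le> (1/2)^d / 3^(d-1)" .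
    have "(K + \<delta> n) ^ d * (1 / sqrt (real n) ^ (d - 1)) \<le> (1/2)^d / 3^(d-1) * (1 / sqrt (real n) ^ (d - 1))"
      using Kb sn by (intro mult_right_mono) auto
    also have "\<dots> = (1/2)^d / (3 * sqrt (real n))^(d-1)" by (simp add: power_mult_distrib)
    also have "\<dots> \<le> (\<Sum>k\<le>n. bn n pp k ^ d)" by (rule sum_pow_lower[OF pp n1 d1])
    finally have lo: "(K + \<delta> n) ^ d * (1 / sqrt (real n) ^ (d - 1)) \<le> (\<Sum>k\<le>n. bn n pp k ^ d)" .
    have lower: "(\<Sum>k=0..n. real (n choose k) ^ d * P ^ k)
        \<ge> (K + \<delta> n) ^ d * real n powr (- (real d - 1) / 2) * (1 + r) ^ (d * n)"
      unfolding S pw using mult_left_mono[OF lo, of "(1 + r) ^ (d * n)"] rpos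
      by (simp add: mult.commute mult.left_commute)
    show "(\<Sum>k=0..n. real (n choose k) ^ d * P ^ k)
        \<le> (c + \<epsilon> n) ^ (d - 1) * real n powr (- (real d - 1) / 2) * (1 + r) ^ (d * n)
    \<and> (\<Sum>k=0..n. real (n choose k) ^ d * P ^ k)
        \<ge> ((r + 1) / sqrt (2 * pi * r) * exp (- ((r + 1)^2 / (2 * r))) + \<delta> n) ^ d
           * real n powr (- (real d - 1) / 2) * (1 + r) ^ (d * n)"
      using upper lower unfolding K_def by blast
  qed
  show ?thesis unfolding r_def[symmetric]
    using elim dlim ev unfolding c_def by blast
qed

end
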